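(* Let $\eta>0$, $\beta\in[0,1)$ and $\lambda_i$ with $\eta\lambda_i>0$, and let ${\mathcal{M}}_i:\mathbb{S}^2\to\mathbb{S}^2$, ${\mathcal{M}}_i({\bm{X}}):={\bm{A}}_i{\bm{X}}{\bm{A}}_i^\top+\eta^2\lambda_i^2({\bm{X}})_{11}{\bm{Q}}$, where ${\bm{A}}_i=\begin{bmatrix}1-\eta\lambda_i&-\beta\\ \eta\lambda_i&\beta\end{bmatrix}$ and ${\bm{Q}}=\begin{bmatrix}1&-1\\-1&1\end{bmatrix}$. For any $c>0$, if $\rho(c{\mathcal{M}}_i)\ge1$, then for every $\alpha>0$ there is no ${\bm{W}}\succeq0$ (${\bm{W}}\in\mathbb{S}^2$) with $(\mathrm{Id}-c{\mathcal{M}}_i)({\bm{W}})\succeq\alpha{\bm{Q}}$.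
   Context: $\mathbb{S}^2$ denotes the space of real symmetric $2\times2$ matrices; $\succeq$ is the Loewner order; $\rho(\cdot)$ denotes spectral radius and $\mathrm{Id}$ the identity map. *)

theory Defs
  imports "HOL-Analysis.Analysis"
begin

text \<open>Matrices of the paper, with entries embedded into any real algebra
  (real for the map on S^2, complex for its complexification).\<close>

definition Amat :: "real \<Rightarrow> real \<Rightarrow> real \<Rightarrow> 'a::real_algebra_1^2^2" where
  "Amat eta beta lam =
     vector [vector [of_real (1 - eta*lam), of_real (- beta)],
             vector [of_real (eta*lam), of_real beta]]"

definition Qmat :: "'a::real_algebra_1^2^2" where
  "Qmat = vector [vector [1, -1], vector [-1, 1]]"

definition msc :: "'a::times \<Rightarrow> 'a^'n^'m \<Rightarrow> 'a^'n^'m" where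
  "msc k X = (\<chi> i j. k * X $ i $ j)"

definition Mop :: "real \<Rightarrow> real \<Rightarrow> real \<Rightarrow> 'a::real_algebra_1^2^2 \<Rightarrow> 'a^2^2" where
  "Mop eta beta lam X =
     Amat eta beta lam ** X ** transpose (Amat eta beta lam)
     + msc (of_real (eta^2 * lam^2) * X $ 1 $ 1) Qmat"

definition sym2 :: "('a^2^2) set" where
  "sym2 = {X. transpose X = X}"

text \<open>Spectrum and spectral radius of a linear operator on S^2, computed on
  its complexification (the complex symmetric 2x2 matrices).\<close>
definition spectrum_S2 :: "(complex^2^2 \<Rightarrow> complex^2^2) \<Rightarrow> complex set" where
  "spectrum_S2 L = {z. \<exists>X \<in> sym2. X \<noteq> 0 \<and> L X = msc z X}"

definition spectral_radius_S2 :: "(complex^2^2 \<Rightarrow> complex^2^2) \<Rightarrow> real" where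
  "spectral_radius_S2 L = Sup (cmod ` spectrum_S2 L)"

definition psd2 :: "real^2^2 \<Rightarrow> bool" where
  "psd2 W \<longleftrightarrow> W \<in> sym2 \<and> (\<forall>v. v \<bullet> (W *v v) \<ge> 0)"

definition loewner_ge :: "real^2^2 \<Rightarrow> real^2^2 \<Rightarrow> bool" where
  "loewner_ge X Y \<longleftrightarrow> psd2 (X - Y)"

end

theory Submission
  imports Defs
begin


lemma cubic_root:
  fixes t2 t1 t0 :: real
  shows "\<exists>z. -(z^3) + t2*z^2 + t1*z + t0 = 0"
proof -
  define S where "S = \<bar>t2\<bar> + \<bar>t1\<bar> + \<bar>t0\<bar>"
  define R where "R = 1 + S"
  have S0: "S \<ge> 0" unfolding S_def by simp
  have R1: "R \<ge> 1" unfolding R_def using S0 by simp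
  have RR: "R \<le> R^2" using R1 by (simp add: power2_eq_square)
  have b: "\<bar>t2*z^2 + t1*z + t0\<bar> \<le> S * R^2" if z: "\<bar>z\<bar> = R" for z
  proof -
    have e1: "\<bar>t2*z^2\<bar> = \<bar>t2\<bar>*R^2" using z by (simp add: abs_mult power2_eq_square)
    have e2: "\<bar>t1*z\<bar> = \<bar>t1\<bar>*R" using z by (simp add: abs_mult)
    have "\<bar>t2*z^2 + t1*z + t0\<bar> \<le> \<bar>t2*z^2\<bar> + \<bar>t1*z\<bar> + \<bar>t0\<bar>"
      by linarith
    also have "\<dots> = \<bar>t2\<bar>*R^2 + \<bar>t1\<bar>*R + \<bar>t0\<bar>" using e1 e2 by simp
    also have "\<dots> \<le> \<bar>t2\<bar>*R^2 + \<bar>t1\<bar>*R^2 + \<bar>t0\<bar>*R^2"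
    proof -
      have "\<bar>t1\<bar>*R \<le> \<bar>t1\<bar>*R^2" using RR by (intro mult_left_mono) auto
      moreover have "\<bar>t0\<bar> \<le> \<bar>t0\<bar>*R^2" using RR R1 by (intro mult_le_cancel_left1[THEN iffD2]) auto
      ultimately show ?thesis by linarith
    qed
    finally show ?thesis by (simp add: S_def algebra_simps)
  qed
  have R3: "R^3 = R * R^2" by (simp add: power2_eq_square power3_eq_cube)
  have R2p: "R^2 > 0" using R1 by simp
  have "S * R^2 < R * R^2" using R2p unfolding R_def by (simp add: distrib_right)
  hence lt: "S * R^2 < R^3" using R3 by simp
  define g where "g z = -(z^3) + t2*z^2 + t1*z + t0" for z
  have "g R < 0"
  proof -
    have "t2*R^2 + t1*R + t0 \<le> S*R^2" using b[of R] R1 by simp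
    thus ?thesis unfolding g_def using lt by linarith
  qed
  moreover have "g (-R) > 0"
  proof -
    have "-(t2*(-R)^2 + t1*(-R) + t0) \<le> S*R^2" using b[of "-R"] R1 by simp
    moreover have "(-R)^3 = -(R^3)" by simp
    ultimately show ?thesis unfolding g_def using lt by linarith
  qed
  ultimately have "\<exists>x. -R \<le> x \<and> x \<le> R \<and> g x = 0"
    using R1 by (intro IVT2) (auto simp: g_def intro!: continuous_intros)
  thus ?thesis unfolding g_def by blast
qed

lemma real_eig3:
  fixes N :: "real^3^3"
  shows "\<exists>z v. v \<noteq> 0 \<and> N *v v = z *s v"
proof -
  define t2 where "t2 = N$1$1 + N$2$2 + N$3$3"
  define t1 where "t1 = -(N$1$1*N$2$2 - N$1$2*N$2$1 + N$1$1*N$3$3 - N$1$3*N$3$1 + N$2$2*N$3$3 - N$2$3*N$3$2)"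
  have m: "mat z $ i $ j = (if i = j then z else (0::real))" for i j z
    by (simp add: mat_def)
  have d: "det (N - mat z) = -(z^3) + t2*z^2 + t1*z + det N" for z
    unfolding det_3[of "N - mat z"] det_3[of N] t2_def t1_def
    by (simp add: m power2_eq_square power3_eq_cube algebra_simps)
  obtain z where "-(z^3) + t2*z^2 + t1*z + det N = 0" using cubic_root by blast
  hence "det (matrix (\<lambda>x. (N - mat z) *v x)) = 0" using d by simp
  hence "\<not> inj (\<lambda>x. (N - mat z) *v x)"
    using det_nz_iff_inj[of "\<lambda>x. (N - mat z) *v x"] by auto
  then obtain x y where xy: "x \<noteq> y" "(N - mat z) *v x = (N - mat z) *v y"
    unfolding inj_def by blast
  define v where "v = x - y"
  have v: "v \<noteq> 0" "(N - mat z) *v v = 0"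
    using xy unfolding v_def by (auto simp: matrix_vector_mult_diff_distrib)
  have mz: "mat z *v v = z *s v"
    by (simp add: vec_eq_iff matrix_vector_mult_def m sum_3 forall_3)
  have "N *v v = z *s v"
    using v(2) mz by (simp add: matrix_vector_mult_diff_rdistrib)
  thus ?thesis using v(1) by blast
qed



definition qf :: "real^2^2 \<Rightarrow> real^2 \<Rightarrow> real" where
  "qf Y v = v \<bullet> (Y *v v)"

lemma qf_expand: "qf Y x = Y$1$1*(x$1*x$1) + (Y$1$2+Y$2$1)*(x$1*x$2) + Y$2$2*(x$2*x$2)"
  by (simp add: qf_def inner_vec_def matrix_vector_mult_def sum_2 algebra_simps)

lemma Mop_entries:
  fixes Y :: "'a::{real_algebra_1,comm_ring_1}^2^2" and eta beta lam :: real
  defines "h \<equiv> eta*lam"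
  shows "Mop eta beta lam Y $1$1 = of_real ((1-h)^2 + h^2) * Y$1$1 - of_real ((1-h)*beta) * (Y$1$2 + Y$2$1) + of_real (beta^2) * Y$2$2"
    and "Mop eta beta lam Y $1$2 = of_real ((1-h)*h - h^2) * Y$1$1 + of_real ((1-h)*beta) * Y$1$2 - of_real (beta*h) * Y$2$1 - of_real (beta^2) * Y$2$2"
    and "Mop eta beta lam Y $2$1 = of_real ((1-h)*h - h^2) * Y$1$1 + of_real ((1-h)*beta) * Y$2$1 - of_real (beta*h) * Y$1$2 - of_real (beta^2) * Y$2$2"
    and "Mop eta beta lam Y $2$2 = of_real (h^2 + h^2) * Y$1$1 + of_real (h*beta) * (Y$1$2 + Y$2$1) + of_real (beta^2) * Y$2$2"
  unfolding Mop_def Amat_def Qmat_def msc_def h_def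
  by (simp_all add: matrix_matrix_mult_def transpose_def sum_2 algebra_simps power2_eq_square)

definition At :: "real \<Rightarrow> real \<Rightarrow> real^2 \<Rightarrow> real^2" where
  "At h beta x = vector [(1-h)*x$1 + h*x$2, beta*(x$2 - x$1)]"

lemma qf_Mop: "qf (Mop eta beta lam Y) x = qf Y (At (eta*lam) beta x) + (eta*lam)^2 * Y$1$1 * (x$1 - x$2)^2"
  by (simp add: qf_expand Mop_entries At_def power2_eq_square algebra_simps)

lemma qf_e1: "qf Y (vector[1,0]) = Y$1$1" by (simp add: qf_expand)
lemma qf_e2: "qf Y (vector[0,1]) = Y$2$2" by (simp add: qf_expand)
lemma qf_e12: "qf Y (vector[1,1]) = Y$1$1 + Y$1$2 + Y$2$1 + Y$2$2" by (simp add: qf_expand)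

lemma qf_add: "qf (X + Y) x = qf X x + qf Y x"
  by (simp add: qf_expand algebra_simps)
lemma qf_diff: "qf (X - Y) x = qf X x - qf Y x"
  by (simp add: qf_expand algebra_simps)
lemma qf_scale: "qf (k *\<^sub>R X) x = k * qf X x"
  by (simp add: qf_expand algebra_simps)
lemma qf_Q: "qf Qmat x = (x$1 - x$2)^2"
  by (simp add: qf_expand Qmat_def power2_eq_square algebra_simps)

lemma Mop_pos:
  assumes "\<And>x. qf Y x \<ge> 0"
  shows "qf (Mop eta beta lam Y) x \<ge> 0"
proof -
  have "Y$1$1 \<ge> 0" using assms[of "vector[1,0]"] by (simp add: qf_e1)
  thus ?thesis using assms[of "At (eta*lam) beta x"] by (simp add: qf_Mop)
qed

lemma qf_Mop_lin:
  "qf (Mop eta beta lam (a *\<^sub>R X + d *\<^sub>R Y)) x = a * qf (Mop eta beta lam X) x + d * qf (Mop eta beta lam Y) x"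
  by (simp add: qf_Mop qf_add qf_scale algebra_simps)

definition nrm :: "real^2^2 \<Rightarrow> real" where
  "nrm Y = \<bar>Y$1$1\<bar> + \<bar>Y$1$2\<bar> + \<bar>Y$2$1\<bar> + \<bar>Y$2$2\<bar>"

lemma qf_bound: "\<bar>qf Y x\<bar> \<le> nrm Y * (x$1^2 + x$2^2)"
proof -
  define n where "n = x$1^2 + x$2^2"
  have a: "\<bar>x$1*x$1\<bar> \<le> n" "\<bar>x$2*x$2\<bar> \<le> n" unfolding n_def by (simp_all add: power2_eq_square)
  have "2*\<bar>x$1*x$2\<bar> \<le> n" unfolding n_def
    using sum_squares_bound[of "\<bar>x$1\<bar>" "\<bar>x$2\<bar>"] by (simp add: abs_mult power2_eq_square)
  hence b: "\<bar>x$1*x$2\<bar> \<le> n" by simp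
  have "\<bar>qf Y x\<bar> \<le> \<bar>Y$1$1\<bar>*\<bar>x$1*x$1\<bar> + (\<bar>Y$1$2\<bar>+\<bar>Y$2$1\<bar>)*\<bar>x$1*x$2\<bar> + \<bar>Y$2$2\<bar>*\<bar>x$2*x$2\<bar>"
  proof -
    have "\<bar>(Y$1$2+Y$2$1)\<bar> \<le> \<bar>Y$1$2\<bar>+\<bar>Y$2$1\<bar>" by simp
    hence "\<bar>(Y$1$2+Y$2$1)*(x$1*x$2)\<bar> \<le> (\<bar>Y$1$2\<bar>+\<bar>Y$2$1\<bar>)*\<bar>x$1*x$2\<bar>"
      by (simp add: abs_mult mult_right_mono)
    moreover have "\<bar>qf Y x\<bar> \<le> \<bar>Y$1$1*(x$1*x$1)\<bar> + \<bar>(Y$1$2+Y$2$1)*(x$1*x$2)\<bar> + \<bar>Y$2$2*(x$2*x$2)\<bar>"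
      unfolding qf_expand
      using abs_triangle_ineq[of "Y$1$1*(x$1*x$1) + (Y$1$2+Y$2$1)*(x$1*x$2)" "Y$2$2*(x$2*x$2)"]
        abs_triangle_ineq[of "Y$1$1*(x$1*x$1)" "(Y$1$2+Y$2$1)*(x$1*x$2)"] by linarith
    moreover have "\<bar>Y$1$1*(x$1*x$1)\<bar> = \<bar>Y$1$1\<bar>*\<bar>x$1*x$1\<bar>" "\<bar>Y$2$2*(x$2*x$2)\<bar> = \<bar>Y$2$2\<bar>*\<bar>x$2*x$2\<bar>"
      by (simp_all add: abs_mult)
    ultimately show ?thesis by linarith
  qed
  also have "\<dots> \<le> \<bar>Y$1$1\<bar>*n + (\<bar>Y$1$2\<bar>+\<bar>Y$2$1\<bar>)*n + \<bar>Y$2$2\<bar>*n"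
    using a b by (intro add_mono mult_left_mono) auto
  finally show ?thesis by (simp add: nrm_def n_def algebra_simps)
qed

lemma pow_zero_lemma:
  fixes a b q :: real
  assumes "0 \<le> q" "q < 1" "\<And>n. \<bar>a\<bar> \<le> b * q^n"
  shows "a = 0"
proof (rule ccontr)
  assume "a \<noteq> 0"
  hence ap: "\<bar>a\<bar> > 0" by simp
  have b0: "b \<ge> \<bar>a\<bar>" using assms(3)[of 0] by simp
  hence bp: "b > 0" using ap by simp
  obtain n where "q^n < \<bar>a\<bar>/b" using real_arch_pow_inv[of "\<bar>a\<bar>/b" q] ap bp assms by auto
  hence "b * q^n < \<bar>a\<bar>" using bp by (simp add: field_simps)
  thus False using assms(3)[of n] by simp
qed



definition re :: "complex^2^2 \<Rightarrow> real^2^2" where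
  "re X = (\<chi> i j. Re (X$i$j))"

lemma re_Mop: "re (Mop eta beta lam X) = Mop eta beta lam (re X)"
  by (simp add: vec_eq_iff forall_2 re_def Mop_entries)

lemma Mop_msc: "Mop eta beta lam (msc (u::complex) X) = msc u (Mop eta beta lam X)"
  by (simp add: vec_eq_iff forall_2 msc_def Mop_entries algebra_simps)

lemma re_msc_real: "re (msc (complex_of_real t * w) X) = t *\<^sub>R re (msc w X)"
  by (simp add: vec_eq_iff re_def msc_def algebra_simps)

lemma re_msc_c: "c *\<^sub>R re (msc u Z) = re (msc u (msc (complex_of_real c) Z))"
  by (simp add: vec_eq_iff re_def msc_def algebra_simps)

lemma msc_msc: "msc (u::complex) (msc z X) = msc (u*z) X"
  by (simp add: vec_eq_iff msc_def algebra_simps)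

lemma spec_nonempty:
  fixes c eta beta lam :: real
  shows "spectrum_S2 (\<lambda>X. msc (complex_of_real c) (Mop eta beta lam X)) \<noteq> {}"
proof -
  define h where "h = eta*lam"
  define N :: "real^3^3" where "N = vector [vector [(1-h)^2 + h^2, -2*((1-h)*beta), beta^2],
        vector [(1-h)*h - h^2, (1-h)*beta - beta*h, -(beta^2)],
        vector [h^2 + h^2, 2*(h*beta), beta^2]]"
  obtain z y where v: "y \<noteq> 0" "N *v y = z *s y" using real_eig3 by blast
  have e: "((1-h)^2 + h^2)*y$1 + (-2*((1-h)*beta))*y$2 + beta^2*y$3 = z*y$1"
          "((1-h)*h - h^2)*y$1 + ((1-h)*beta - beta*h)*y$2 + (-(beta^2))*y$3 = z*y$2"
          "(h^2 + h^2)*y$1 + (2*(h*beta))*y$2 + beta^2*y$3 = z*y$3"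
    using v(2) by (simp_all add: vec_eq_iff forall_3 N_def matrix_vector_mult_def sum_3)
  define X :: "complex^2^2" where "X = vector [vector [of_real (y$1), of_real (y$2)], vector [of_real (y$2), of_real (y$3)]]"
  have Xs: "X \<in> sym2" by (simp add: sym2_def X_def vec_eq_iff forall_2 transpose_def)
  have X0: "X \<noteq> 0"
  proof
    assume "X = 0"
    hence "y$1 = 0" "y$2 = 0" "y$3 = 0" by (auto simp: X_def vec_eq_iff forall_2 dest: spec[of _ 1] spec[of _ 2])
    hence "y = 0" by (simp add: vec_eq_iff forall_3)
    thus False using v(1) by simp
  qed
  have r: "complex_of_real a = complex_of_real b" if "a = b" for a b using that by simp
  have "Mop eta beta lam X = msc (complex_of_real z) X"
  proof -
    have m11: "Mop eta beta lam X $1$1 = of_real (((1-h)^2 + h^2)*y$1 + (-2*((1-h)*beta))*y$2 + beta^2*y$3)"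
      by (simp add: Mop_entries X_def h_def algebra_simps)
    have m12: "Mop eta beta lam X $1$2 = of_real (((1-h)*h - h^2)*y$1 + ((1-h)*beta - beta*h)*y$2 + (-(beta^2))*y$3)"
      by (simp add: Mop_entries X_def h_def algebra_simps)
    have m21: "Mop eta beta lam X $2$1 = of_real (((1-h)*h - h^2)*y$1 + ((1-h)*beta - beta*h)*y$2 + (-(beta^2))*y$3)"
      by (simp add: Mop_entries X_def h_def algebra_simps)
    have m22: "Mop eta beta lam X $2$2 = of_real ((h^2 + h^2)*y$1 + (2*(h*beta))*y$2 + beta^2*y$3)"
      by (simp add: Mop_entries X_def h_def algebra_simps)
    have "Mop eta beta lam X $1$1 = of_real z * X$1$1" unfolding m11 e(1) by (simp add: X_def)
    moreover have "Mop eta beta lam X $1$2 = of_real z * X$1$2" unfolding m12 e(2) by (simp add: X_def)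
    moreover have "Mop eta beta lam X $2$1 = of_real z * X$2$1" unfolding m21 e(2) by (simp add: X_def)
    moreover have "Mop eta beta lam X $2$2 = of_real z * X$2$2" unfolding m22 e(3) by (simp add: X_def)
    ultimately show ?thesis unfolding vec_eq_iff forall_2 msc_def by simp
  qed
  hence "msc (complex_of_real c) (Mop eta beta lam X) = msc (complex_of_real (c*z)) X"
    by (simp add: msc_msc)
  thus ?thesis using Xs X0 unfolding spectrum_S2_def by blast
qed

lemma spec_bound:
  fixes T :: "real^2^2" and c r m eta beta lam :: real
  assumes cp: "c > 0" and r0: "0 \<le> r" and r1: "r < 1" and mp: "m > 0"
    and Tpos: "\<And>x. qf T x \<ge> m*(x$1^2+x$2^2)"
    and contr: "\<And>x. c * qf (Mop eta beta lam T) x \<le> r * qf T x"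
    and zs: "z \<in> spectrum_S2 (\<lambda>X. msc (complex_of_real c) (Mop eta beta lam X))"
  shows "cmod z \<le> r"
proof (rule ccontr)
  assume "\<not> cmod z \<le> r"
  hence zr: "cmod z > r" by simp
  define \<rho> where "\<rho> = cmod z"
  have \<rho>p: "\<rho> > 0" using zr r0 unfolding \<rho>_def by linarith
  hence z0: "z \<noteq> 0" unfolding \<rho>_def by auto
  obtain X where Xs: "X \<in> sym2" and X0: "X \<noteq> 0"
    and eig: "msc (complex_of_real c) (Mop eta beta lam X) = msc z X"
    using zs unfolding spectrum_S2_def by blast
  define M where "M = (Mop eta beta lam :: real^2^2 \<Rightarrow> real^2^2)"
  define Yu where "Yu u = re (msc u X)" for u
  have key: "c *\<^sub>R M (Yu u) = Yu (u*z)" for u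
  proof -
    have "c *\<^sub>R M (Yu u) = c *\<^sub>R re (Mop eta beta lam (msc u X))"
      unfolding M_def Yu_def re_Mop ..
    also have "\<dots> = re (msc u (msc (complex_of_real c) (Mop eta beta lam X)))"
      unfolding Mop_msc re_msc_c ..
    also have "\<dots> = Yu (u*z)" unfolding eig msc_msc Yu_def ..
    finally show ?thesis .
  qed
  have Tnn: "qf T x \<ge> 0" for x
    using Tpos[of x] mp by (smt (verit) mult_nonneg_nonneg zero_le_power2)
  have MTnn: "qf (M T) x \<ge> 0" for x unfolding M_def by (rule Mop_pos[OF Tnn])
  define nX where "nX = cmod (X$1$1) + cmod (X$1$2) + cmod (X$2$1) + cmod (X$2$2)"
  define t0 where "t0 = nX / m"
  define q where "q = r / \<rho>"
  have q0: "0 \<le> q" and q1: "q < 1" using r0 zr \<rho>p unfolding q_def \<rho>_def by (auto simp: field_simps)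
  have bnd: "\<forall>u. cmod u = 1 \<longrightarrow> (\<forall>x. \<bar>qf (Yu u) x\<bar> \<le> t0 * q^n * qf T x)" for n
  proof (induction n)
    case 0
    show ?case
    proof (intro allI impI)
      fix u :: complex and x :: "real^2" assume u1: "cmod u = 1"
      have ab: "\<bar>Re (u * w)\<bar> \<le> cmod w" for w
        using abs_Re_le_cmod[of "u*w"] u1 by (simp add: norm_mult)
      have "nrm (Yu u) \<le> nX" unfolding nrm_def nX_def Yu_def re_def msc_def
        using ab by (simp add: add_mono)
      hence "\<bar>qf (Yu u) x\<bar> \<le> nX * (x$1^2+x$2^2)"
        using qf_bound[of "Yu u" x] by (smt (verit) mult_right_mono zero_le_power2)
      also have "\<dots> \<le> t0 * qf T x"
      proof -
        have "nX * (x$1^2+x$2^2) = t0 * (m * (x$1^2+x$2^2))" unfolding t0_def using mp by simp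
        moreover have "t0 \<ge> 0" unfolding t0_def nX_def using mp by simp
        moreover have "t0 * (m * (x$1^2+x$2^2)) \<le> t0 * qf T x"
          using Tpos[of x] \<open>t0 \<ge> 0\<close> by (rule mult_left_mono)
        ultimately show ?thesis by linarith
      qed
      finally show "\<bar>qf (Yu u) x\<bar> \<le> t0 * q^0 * qf T x" by simp
    qed
  next
    case (Suc n)
    show ?case
    proof (intro allI impI)
      fix u' :: complex and x :: "real^2" assume u1: "cmod u' = 1"
      define u where "u = u' * complex_of_real \<rho> / z"
      have uu: "cmod u = 1" unfolding u_def using u1 \<rho>p z0 by (simp add: norm_mult norm_divide \<rho>_def)
      have uz: "u * z = complex_of_real \<rho> * u'" unfolding u_def using z0 by (simp add: field_simps)
      define s where "s = t0 * q^n"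
      have IH: "\<bar>qf (Yu u) y\<bar> \<le> s * qf T y" for y using Suc.IH uu unfolding s_def by blast
      have IH2: "qf (Yu u) y \<le> s*qf T y \<and> -qf (Yu u) y \<le> s*qf T y" for y
        using IH[of y] by (simp add: abs_le_iff)
      have p1: "qf (M (s *\<^sub>R T + 1 *\<^sub>R Yu u)) x \<ge> 0"
        unfolding M_def
      proof (rule Mop_pos)
        fix y show "0 \<le> qf (s *\<^sub>R T + 1 *\<^sub>R Yu u) y" using IH2[of y] by (simp add: qf_add qf_diff qf_scale)
      qed
      have p2: "qf (M (s *\<^sub>R T + (-1) *\<^sub>R Yu u)) x \<ge> 0"
        unfolding M_def
      proof (rule Mop_pos)
        fix y show "0 \<le> qf (s *\<^sub>R T + (-1) *\<^sub>R Yu u) y" using IH2[of y] by (simp add: qf_add qf_diff qf_scale)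
      qed
      have absM: "\<bar>qf (M (Yu u)) x\<bar> \<le> s * qf (M T) x"
        using p1 p2 unfolding M_def qf_Mop_lin by (simp add: abs_le_iff)
      have "Yu (u*z) = \<rho> *\<^sub>R Yu u'" unfolding uz Yu_def re_msc_real ..
      hence e: "\<rho> *\<^sub>R Yu u' = c *\<^sub>R M (Yu u)" using key[of u] by simp
      have "Yu u' = (1/\<rho>) *\<^sub>R (\<rho> *\<^sub>R Yu u')" using \<rho>p by simp
      also have "\<dots> = (c/\<rho>) *\<^sub>R M (Yu u)" unfolding e by simp
      finally have "\<bar>qf (Yu u') x\<bar> = (c/\<rho>) * \<bar>qf (M (Yu u)) x\<bar>"
        using cp \<rho>p by (simp add: qf_scale abs_mult)
      also have "\<dots> \<le> (c/\<rho>) * (s * qf (M T) x)"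
        using absM cp \<rho>p by (intro mult_left_mono) auto
      also have "\<dots> = (s/\<rho>) * (c * qf (M T) x)" by simp
      also have "\<dots> \<le> (s/\<rho>) * (r * qf T x)"
      proof (rule mult_left_mono)
        show "c * qf (M T) x \<le> r * qf T x" using contr[of x] unfolding M_def .
        have "s \<ge> 0" unfolding s_def t0_def nX_def using q0 mp by simp
        thus "0 \<le> s/\<rho>" using \<rho>p by simp
      qed
      also have "\<dots> = t0 * q^(Suc n) * qf T x" unfolding s_def q_def by (simp add: field_simps)
      finally show "\<bar>qf (Yu u') x\<bar> \<le> t0 * q^(Suc n) * qf T x" .
    qed
  qed
  have qz: "qf (Yu u) x = 0" if "cmod u = 1" for u x
  proof (rule pow_zero_lemma[OF q0 q1, of _ "t0 * qf T x"])
    fix n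
    have "t0 * q^n * qf T x = (t0 * qf T x) * q^n" by (simp add: algebra_simps)
    moreover have "\<bar>qf (Yu u) x\<bar> \<le> t0 * q^n * qf T x" using bnd[of n] that by blast
    ultimately show "\<bar>qf (Yu u) x\<bar> \<le> (t0 * qf T x) * q^n" by linarith
  qed
  have "(transpose X)$1$2 = X$1$2" using Xs unfolding sym2_def by simp
  hence Xsym: "X$1$2 = X$2$1" unfolding transpose_def by simp
  have Y0: "\<forall>i j. Yu u $i$j = 0" if "cmod u = 1" for u
  proof -
    have a: "Yu u $1$1 = 0" using qz[OF that, of "vector[1,0]"] unfolding qf_e1 .
    have b: "Yu u $2$2 = 0" using qz[OF that, of "vector[0,1]"] unfolding qf_e2 .
    have c: "Yu u $1$1 + Yu u $1$2 + Yu u $2$1 + Yu u $2$2 = 0" using qz[OF that, of "vector[1,1]"] unfolding qf_e12 .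
    have d: "Yu u $1$2 = Yu u $2$1" unfolding Yu_def re_def msc_def using Xsym by simp
    show ?thesis unfolding forall_2 using a b c d by (intro conjI; linarith)
  qed
  have "X$i$j = 0" for i j
  proof -
    have "Yu 1 $i$j = 0" using Y0[of 1] by simp
    hence "Re (X$i$j) = 0" by (simp add: Yu_def re_def msc_def)
    moreover have "Yu (-\<i>) $i$j = 0" using Y0[of "-\<i>"] by simp
    hence "Im (X$i$j) = 0" by (simp add: Yu_def re_def msc_def)
    ultimately show ?thesis by (simp add: complex_eq_iff)
  qed
  hence "X = 0" by (simp add: vec_eq_iff)
  thus False using X0 by simp
qed

lemma lowbound:
  fixes p q c x1 x2 :: real
  assumes pq: "p + q = 1" and cp: "c > 0"
  shows "min 1 c / (2*p^2 + 2*q^2 + 4) * (x1^2 + x2^2) \<le> (x1 - x2)^2 + c * (p*x1 + q*x2)^2"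
proof -
  define t where "t = x1 - x2"
  define y where "y = p*x1 + q*x2"
  define k where "k = min 1 c"
  define K where "K = 2*p^2 + 2*q^2 + 4"
  have kp: "k > 0" unfolding k_def using cp by simp
  have Kp: "K > 0" unfolding K_def by (simp add: add_nonneg_pos)
  have x1e: "x1 = q*t + y" unfolding t_def y_def using pq by (simp add: algebra_simps) (metis distrib_right mult_1 pq)
  have x2e: "x2 = -(p*t) + y" unfolding t_def y_def using pq by (simp add: algebra_simps) (metis distrib_right mult_1 pq)
  have i1: "x1^2 \<le> 2*q^2*t^2 + 2*y^2"
  proof -
    have "(q*t+y)^2 + (q*t-y)^2 = 2*q^2*t^2 + 2*y^2" by (simp add: power2_eq_square algebra_simps)
    moreover have "0 \<le> (q*t-y)^2" by simp
    ultimately show ?thesis unfolding x1e by linarith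
  qed
  have i2: "x2^2 \<le> 2*p^2*t^2 + 2*y^2"
  proof -
    have "(-(p*t)+y)^2 + (-(p*t)-y)^2 = 2*p^2*t^2 + 2*y^2" by (simp add: power2_eq_square algebra_simps)
    moreover have "0 \<le> (-(p*t)-y)^2" by simp
    ultimately show ?thesis unfolding x2e by linarith
  qed
  have "x1^2 + x2^2 \<le> K * (t^2 + y^2)"
  proof -
    have "K*(t^2+y^2) = 2*q^2*t^2 + 2*p^2*t^2 + 4*t^2 + 2*p^2*y^2 + 2*q^2*y^2 + 4*y^2"
      by (simp add: K_def algebra_simps)
    moreover have "0 \<le> p^2*y^2" "0 \<le> q^2*y^2" "0 \<le> t^2" by simp_all
    ultimately show ?thesis using i1 i2 by linarith
  qed
  hence "k/K * (x1^2 + x2^2) \<le> k/K * (K * (t^2 + y^2))" using kp Kp by (intro mult_left_mono) auto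
  also have "\<dots> = k * t^2 + k * y^2" using Kp by (simp add: algebra_simps)
  also have "\<dots> \<le> t^2 + c * y^2"
  proof -
    have "k * t^2 \<le> 1 * t^2" unfolding k_def by (intro mult_right_mono) auto
    moreover have "k * y^2 \<le> c * y^2" unfolding k_def by (intro mult_right_mono) auto
    ultimately show ?thesis by simp
  qed
  finally show ?thesis unfolding k_def K_def t_def y_def .
qed

theorem lemmaA4:
  fixes eta beta lam c :: real
  assumes "eta > 0" and "0 \<le> beta" and "beta < 1" and "eta * lam > 0"
    and "c > 0"
    and "spectral_radius_S2 (\<lambda>X. msc (complex_of_real c) (Mop eta beta lam X)) \<ge> 1"
  shows "\<forall>alpha::real. alpha > 0 \<longrightarrow>
           \<not> (\<exists>W::real^2^2. W \<in> sym2 \<and> psd2 W \<and>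
                loewner_ge (W - c *\<^sub>R Mop eta beta lam W) (alpha *\<^sub>R Qmat))"
proof (intro allI impI notI)
  fix alpha :: real
  assume ap: "alpha > 0"
  assume "\<exists>W::real^2^2. W \<in> sym2 \<and> psd2 W \<and>
                loewner_ge (W - c *\<^sub>R Mop eta beta lam W) (alpha *\<^sub>R Qmat)"
  then obtain W :: "real^2^2" where Wp: "psd2 W"
    and Wl: "loewner_ge (W - c *\<^sub>R Mop eta beta lam W) (alpha *\<^sub>R Qmat)" by blast
  have cp: "c > 0" using assms(5) .
  define M where "M = (Mop eta beta lam :: real^2^2 \<Rightarrow> real^2^2)"
  define h where "h = eta*lam"
  define p where "p = 1 - h + beta"
  define q where "q = h - beta"
  have pq: "p + q = 1" unfolding p_def q_def by simp
  have H1: "qf W x \<ge> 0" for x using Wp unfolding psd2_def qf_def by blast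
  have H2: "qf W x - c * qf (M W) x \<ge> alpha * (x$1 - x$2)^2" for x
  proof -
    have "qf (W - c *\<^sub>R M W - alpha *\<^sub>R Qmat) x \<ge> 0"
      using Wl unfolding loewner_ge_def psd2_def qf_def M_def by blast
    thus ?thesis by (simp add: qf_diff qf_scale qf_Q)
  qed
  have MWnn: "qf (M W) x \<ge> 0" for x unfolding M_def by (rule Mop_pos[OF H1])
  define W' where "W' = 1 *\<^sub>R W + c *\<^sub>R M W"
  have qW': "qf W' x = qf W x + c * qf (M W) x" for x unfolding W'_def by (simp add: qf_add qf_scale)
  have W'nn: "qf W' x \<ge> 0" for x using H1[of x] MWnn[of x] qW'[of x] cp by simp
  have MW': "qf (M W') x = qf (M W) x + c * qf (M (M W)) x" for x
    unfolding W'_def M_def qf_Mop_lin by simp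
  have DMW: "qf (M W) x - c * qf (M (M W)) x \<ge> alpha * (p*x$1 + q*x$2)^2" for x
  proof -
    have e1: "qf (M W) x = qf W (At h beta x) + h^2 * W$1$1 * (x$1 - x$2)^2"
      unfolding M_def h_def by (rule qf_Mop)
    have e2: "qf (M (M W)) x = qf (M W) (At h beta x) + h^2 * (M W)$1$1 * (x$1 - x$2)^2"
      unfolding M_def h_def by (rule qf_Mop)
    have at: "(At h beta x)$1 - (At h beta x)$2 = p*x$1 + q*x$2"
      by (simp add: At_def p_def q_def algebra_simps)
    have f1: "qf W (At h beta x) - c * qf (M W) (At h beta x) \<ge> alpha * (p*x$1 + q*x$2)^2"
      using H2[of "At h beta x"] unfolding at .
    have f2: "W$1$1 - c * (M W)$1$1 \<ge> alpha" using H2[of "vector[1,0]"] by (simp add: qf_e1)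
    have f3: "h^2 * (x$1-x$2)^2 * alpha \<le> h^2 * (x$1-x$2)^2 * (W$1$1 - c * (M W)$1$1)"
      using f2 by (intro mult_left_mono) auto
    have f4: "0 \<le> h^2 * (x$1-x$2)^2 * alpha" using ap by simp
    have "qf (M W) x - c * qf (M (M W)) x = (qf W (At h beta x) - c * qf (M W) (At h beta x))
          + h^2 * (x$1-x$2)^2 * (W$1$1 - c * (M W)$1$1)"
      unfolding e1 e2 by (simp add: algebra_simps)
    thus ?thesis using f1 f3 f4 by linarith
  qed
  define nx where "nx x = (x$1^2 + x$2^2)" for x :: "real^2"
  define mu where "mu = min 1 c / (2*p^2 + 2*q^2 + 4)"
  have mup: "mu > 0" unfolding mu_def using cp by (simp add: add_nonneg_pos)
  have DW': "qf W' x - c * qf (M W') x \<ge> alpha * mu * nx x" for x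
  proof -
    have "qf W' x - c * qf (M W') x = (qf W x - c*qf (M W) x) + c * (qf (M W) x - c * qf (M (M W)) x)"
      by (simp add: qW' MW' algebra_simps)
    moreover have "c * (alpha * (p*x$1 + q*x$2)^2) \<le> c * (qf (M W) x - c * qf (M (M W)) x)"
      using DMW[of x] cp by (intro mult_left_mono) auto
    moreover have "mu * nx x \<le> (x$1 - x$2)^2 + c * (p*x$1 + q*x$2)^2"
      unfolding mu_def nx_def by (rule lowbound[OF pq cp])
    hence "alpha * (mu * nx x) \<le> alpha * ((x$1 - x$2)^2 + c * (p*x$1 + q*x$2)^2)"
      using ap by (intro mult_left_mono) auto
    ultimately show ?thesis using H2[of x] by (simp add: algebra_simps)
  qed
  define K where "K = nrm W' + 1"
  have Kp: "K > 0" unfolding K_def nrm_def by (simp add: add_nonneg_pos)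
  have up: "qf W' x \<le> K * nx x" for x
  proof -
    have "qf W' x \<le> nrm W' * nx x" using qf_bound[of W' x] unfolding nx_def by linarith
    moreover have "nrm W' * nx x \<le> K * nx x" unfolding K_def nx_def by (simp add: algebra_simps)
    ultimately show ?thesis by linarith
  qed
  define dl where "dl = alpha * mu / K"
  have dlp: "dl > 0" unfolding dl_def using ap mup Kp by simp
  define r where "r = max 0 (1 - dl)"
  have r0: "0 \<le> r" and r1: "r < 1" unfolding r_def using dlp by auto
  have MW'nn: "qf (M W') x \<ge> 0" for x unfolding M_def by (rule Mop_pos[OF W'nn])
  have contr: "c * qf (M W') x \<le> r * qf W' x" for x
  proof -
    have "dl * qf W' x \<le> dl * (K * nx x)" using up[of x] dlp by (intro mult_left_mono) auto
    also have "\<dots> = alpha * mu * nx x" unfolding dl_def using Kp by simp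
    finally have "c * qf (M W') x \<le> (1 - dl) * qf W' x" using DW'[of x] by (simp add: algebra_simps)
    also have "\<dots> \<le> r * qf W' x" unfolding r_def using W'nn[of x] by (intro mult_right_mono) auto
    finally show ?thesis .
  qed
  have Tpos: "qf W' x \<ge> (alpha*mu)*(x$1^2+x$2^2)" for x
    using DW'[of x] MW'nn[of x] cp unfolding nx_def
    by (smt (verit) mult_nonneg_nonneg)
  have amp: "alpha*mu > 0" using ap mup by simp
  have bnd: "cmod z \<le> r" if "z \<in> spectrum_S2 (\<lambda>X. msc (complex_of_real c) (Mop eta beta lam X))" for z
    by (rule spec_bound[OF cp r0 r1 amp Tpos contr[unfolded M_def] that])
  have "spectral_radius_S2 (\<lambda>X. msc (complex_of_real c) (Mop eta beta lam X)) \<le> r"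
    unfolding spectral_radius_S2_def
    using spec_nonempty[of c eta beta lam] bnd by (intro cSup_least) auto
  thus False using assms(6) r1 by linarith
qed

end
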